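(* Let $X$ be a topological space. Then the uniform space $(C(X),\mathcal{U}_\Gamma)$ is complete.
   Context: $C(X)$ is the set of continuous real-valued functions on $X$. $LSC(X,(0,1))$ is the set of lower semicontinuous functions $X\to(0,1)$. For $\epsilon\in LSC(X,(0,1))$ let $B(\epsilon)=\{(f,g)\in C(X)\times C(X): |f(x)-g(x)|<\epsilon(x)\ \forall x\in X\}$. The uniformity $\mathcal{U}_\Gamma$ on $C(X)$ is the uniformity having $\{B(\epsilon):\epsilon\in LSC(X,(0,1))\}$ as a base; it induces the graph topology on $C(X)$ (the topology with base the sets $\{f\in C(X): \text{graph}(f)\subset G\}$, $G$ open in $X\times\mathbb{R}$). *)

theory Defs
  imports "HOL-Analysis.Analysis"
begin

definition Cfun :: "('a::topological_space \<Rightarrow> real) set" where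
  "Cfun = {f. continuous_on UNIV f}"

definition lsc :: "('a::topological_space \<Rightarrow> real) \<Rightarrow> bool" where
  "lsc f \<longleftrightarrow> (\<forall>t. open {x. t < f x})"

definition LSC01 :: "('a::topological_space \<Rightarrow> real) set" where
  "LSC01 = {e. lsc e \<and> (\<forall>x. 0 < e x \<and> e x < 1)}"

definition Bent :: "('a::topological_space \<Rightarrow> real) \<Rightarrow> (('a \<Rightarrow> real) \<times> ('a \<Rightarrow> real)) set" where
  "Bent e = {(f, g). f \<in> Cfun \<and> g \<in> Cfun \<and> (\<forall>x. \<bar>f x - g x\<bar> < e x)}"

definition unif_Gamma :: "(('a::topological_space \<Rightarrow> real) \<times> ('a \<Rightarrow> real)) filter" where
  "unif_Gamma = (INF e\<in>LSC01. principal (Bent e))"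

definition nhds_Gamma :: "('a::topological_space \<Rightarrow> real) \<Rightarrow> ('a \<Rightarrow> real) filter" where
  "nhds_Gamma f = (INF e\<in>LSC01. principal {g. (f, g) \<in> Bent e})"

definition cauchy_Gamma :: "('a::topological_space \<Rightarrow> real) filter \<Rightarrow> bool" where
  "cauchy_Gamma F \<longleftrightarrow> F \<noteq> bot \<and> F \<le> principal Cfun \<and> F \<times>\<^sub>F F \<le> unif_Gamma"

end

theory Submission
  imports Defs
begin

lemma const_LSC01: "0 < (c::real) \<Longrightarrow> c < 1 \<Longrightarrow> (\<lambda>_. c) \<in> LSC01"
  unfolding LSC01_def lsc_def
proof (intro CollectI conjI allI)
  fix t
  show "open {x::'a. t < c}" by (cases "t < c") auto
qed auto

lemma half_LSC01: "e \<in> LSC01 \<Longrightarrow> (\<lambda>x. e x / 2) \<in> LSC01"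
  unfolding LSC01_def lsc_def
proof (intro CollectI conjI allI)
  fix t assume "e \<in> {e. (\<forall>t. open {x. t < e x}) \<and> (\<forall>x. 0 < e x \<and> e x < 1)}"
  then have "open {x. 2*t < e x}" by auto
  moreover have "{x. t < e x / 2} = {x. 2*t < e x}" by auto
  ultimately show "open {x. t < e x / 2}" by simp
next
  fix x assume "e \<in> {e. (\<forall>t. open {x. t < e x}) \<and> (\<forall>x. 0 < e x \<and> e x < 1)}"
  then have "0 < e x" "e x < 1" by auto
  then show "0 < e x / 2" "e x / 2 < 1" by auto
qed

lemma cauchy_Q:
  assumes "cauchy_Gamma F" "e \<in> LSC01"
  shows "\<exists>Q. eventually Q F \<and> (\<forall>g h. Q g \<longrightarrow> Q h \<longrightarrow> (g, h) \<in> Bent e)"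
proof -
  have "F \<times>\<^sub>F F \<le> principal (Bent e)"
    using assms unfolding cauchy_Gamma_def unif_Gamma_def
    by (meson INF_lower order_trans)
  then have "eventually (\<lambda>p. p \<in> Bent e) (F \<times>\<^sub>F F)" by (simp add: le_principal)
  then show ?thesis unfolding eventually_prod_same by auto
qed

theorem proposition1p3:
  fixes F :: "('a::topological_space \<Rightarrow> real) filter"
  assumes "cauchy_Gamma F"
  shows "\<exists>f\<in>Cfun. F \<le> nhds_Gamma f"
proof -
  have Fnb: "F \<noteq> bot" and FC: "eventually (\<lambda>g. g \<in> Cfun) F"
    using assms unfolding cauchy_Gamma_def by (auto simp: le_principal)
  have "\<exists>l. filtermap (\<lambda>g. g x) F \<le> nhds l" for x
  proof (rule cauchy_filter_complete_converges[OF _ complete_UNIV])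
    show "cauchy_filter (filtermap (\<lambda>g. g x) F)"
      unfolding cauchy_filter_metric_filtermap
    proof (intro allI impI)
      fix \<epsilon> :: real assume "\<epsilon> > 0"
      define c where "c = min \<epsilon> (1/2)"
      have "(\<lambda>_. c) \<in> (LSC01 :: ('a \<Rightarrow> real) set)"
        using \<open>\<epsilon> > 0\<close> by (intro const_LSC01) (auto simp: c_def)
      from cauchy_Q[OF assms this] obtain Q where "eventually Q F"
        "\<forall>g h. Q g \<longrightarrow> Q h \<longrightarrow> (g, h) \<in> Bent (\<lambda>_. c)" by blast
      then show "\<exists>P. eventually P F \<and> (\<forall>g h. P g \<and> P h \<longrightarrow> dist (g x) (h x) < \<epsilon>)"
        by (intro exI[of _ Q]) (force simp: Bent_def dist_real_def c_def)
    qed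
    show "filtermap (\<lambda>g. g x) F \<le> principal UNIV" by simp
    show "filtermap (\<lambda>g. g x) F \<noteq> bot" using Fnb by (simp add: filtermap_bot_iff)
  qed
  then obtain f where f: "\<And>x. ((\<lambda>g. g x) \<longlongrightarrow> f x) F"
    unfolding filterlim_def by metis
  have bound: "eventually (\<lambda>g. g \<in> Cfun \<and> (\<forall>x. \<bar>g x - f x\<bar> \<le> e x / 2)) F"
    if e: "e \<in> LSC01" for e
  proof -
    from cauchy_Q[OF assms half_LSC01[OF e]] obtain Q where Q: "eventually Q F"
      "\<And>g h. Q g \<Longrightarrow> Q h \<Longrightarrow> (g, h) \<in> Bent (\<lambda>x. e x / 2)" by blast
    have "\<bar>g x - f x\<bar> \<le> e x / 2" if "Q g" for g x
    proof (rule tendsto_upperbound[OF _ _ Fnb])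
      show "((\<lambda>h. \<bar>g x - h x\<bar>) \<longlongrightarrow> \<bar>g x - f x\<bar>) F"
        by (intro tendsto_intros f)
      show "eventually (\<lambda>h. \<bar>g x - h x\<bar> \<le> e x / 2) F"
        using Q(1)
      proof (rule eventually_mono)
        fix h assume "Q h"
        from Q(2)[OF that this] show "\<bar>g x - h x\<bar> \<le> e x / 2"
          unfolding Bent_def by (auto intro: less_imp_le)
      qed
    qed
    note * = this
    show ?thesis using eventually_conj[OF FC Q(1)]
      by (rule eventually_mono) (use * in blast)
  qed
  have "continuous_on UNIV f"
  proof (rule uniform_limit_theorem)
    show "\<forall>\<^sub>F g in F. continuous_on UNIV g" using FC by (rule eventually_mono) (simp add: Cfun_def)
    show "\<not> trivial_limit F" using Fnb by simp
    show "uniform_limit UNIV (\<lambda>g. g) f F"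
      unfolding uniform_limit_iff
    proof (intro allI impI)
      fix \<epsilon> :: real assume "\<epsilon> > 0"
      define c where "c = min \<epsilon> (1/2)"
      have "(\<lambda>_. c) \<in> (LSC01 :: ('a \<Rightarrow> real) set)"
        using \<open>\<epsilon> > 0\<close> by (intro const_LSC01) (auto simp: c_def)
      from bound[OF this] show "\<forall>\<^sub>F g in F. \<forall>x\<in>UNIV. dist (g x) (f x) < \<epsilon>"
      proof (rule eventually_mono)
        fix g assume g: "g \<in> Cfun \<and> (\<forall>x. \<bar>g x - f x\<bar> \<le> c / 2)"
        have "c / 2 < \<epsilon>" using \<open>\<epsilon> > 0\<close> by (simp add: c_def)
        then show "\<forall>x\<in>UNIV. dist (g x) (f x) < \<epsilon>"
          using g by (smt (verit) dist_real_def)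
      qed
    qed
  qed
  then have fC: "f \<in> Cfun" by (simp add: Cfun_def)
  have "F \<le> nhds_Gamma f"
    unfolding nhds_Gamma_def le_INF_iff le_principal
  proof (intro ballI)
    fix e :: "'a \<Rightarrow> real" assume e: "e \<in> LSC01"
    then have pos: "\<And>x. 0 < e x" by (auto simp: LSC01_def)
    from bound[OF e] show "eventually (\<lambda>g. g \<in> {g. (f, g) \<in> Bent e}) F"
    proof (rule eventually_mono)
      fix g assume g: "g \<in> Cfun \<and> (\<forall>x. \<bar>g x - f x\<bar> \<le> e x / 2)"
      have "\<bar>f x - g x\<bar> < e x" for x 
      proof -
        have "\<bar>g x - f x\<bar> \<le> e x / 2" using g by blast
        then show ?thesis using pos[of x] by linarith
      qed
      then show "g \<in> {g. (f, g) \<in> Bent e}" using g fC by (simp add: Bent_def)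
    qed
  qed
  then show ?thesis using fC by blast
qed

end
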